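(* Let $r\ge2$, $n\ge2r$, and let $H\subseteq\binom{\Omega_n}{r}$ be $M_1^{(r)}$-saturated. Then: (1) for all $i$, $\rho(v_{i+1})=\lambda(v_i)$; (2) for all distinct $v_i,v_j$, $|[\rho(v_i),\lambda(v_i)]\cap[\rho(v_j),\lambda(v_j)]|\le1$; (3) for every $j$, there is exactly one vertex $v_i$ such that the interval $[\rho(v_i),\lambda(v_i)]$ contains both $v_j$ and $v_{j+1}$; (4) if $\lambda(v_i)\neq\rho(v_i)$, then $\lambda(\rho(v_i))=v_i$ and $\rho(\rho(v_i))\in[\lambda(v_i),v_i)$.
   Context: $\Omega_n=\{v_0,\dots,v_{n-1}\}$ with cyclic order $v_0<\dots<v_{n-1}<v_0$, indices mod $n$. For distinct vertices $u,w$, $(u,w)$ is the set of vertices strictly between $u$ and $w$ moving clockwise from $u$ to $w$; $[u,w]=(u,w)\cup\{u,w\}$, $[u,w)=(u,w)\cup\{u\}$; $[u,u]=\{u\}$. An $r$-cgh $H\subseteq\binom{\Omega_n}{r}$ is $M_1^{(r)}$-saturated if there are no edges $h_1,h_2\in H$ and vertices $u\neq u'$ with $h_1\subseteq[u,u']$ and $h_2\cap[u,u']=\emptyset$, but for every $e\in\binom{\Omega_n}{r}\setminus H$ such a pair exists in $H\cup\{e\}$. In such $H$ every vertex lies in an edge. $\lambda(v_i)$ is the vertex $u$ such that some $h\in H$ with $v_i\in h$ satisfies $h\subseteq[u,v_i]$, while no $h\in H$ with $v_i\in h$ satisfies $h\subseteq[u',v_i]$, $u'$ the clockwise successor of $u$.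 $\rho(v_i)$ is the vertex $u$ such that some $h\in H$ with $v_i\in h$ satisfies $h\subseteq[v_i,u]$ but none with $h\subseteq[v_i,u'']$, $u''$ the clockwise predecessor of $u$. *)

theory Defs
  imports Main
begin

text \<open>Vertices of \<Omega>_n are represented by 0,...,n-1 (vertex v_i is i), indices mod n.\<close>

definition cyc_vertices :: "nat \<Rightarrow> nat set" where
  "cyc_vertices n = {0..<n}"

text \<open>Closed clockwise interval [u,w]; for u = w this is {u}.\<close>
definition cint :: "nat \<Rightarrow> nat \<Rightarrow> nat \<Rightarrow> nat set" where
  "cint n u w = {(u + k) mod n | k. k \<le> (w + n - u) mod n}"

definition cint_ho :: "nat \<Rightarrow> nat \<Rightarrow> nat \<Rightarrow> nat set" where
  "cint_ho n u w = {(u + k) mod n | k. k < (w + n - u) mod n}"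

definition succ_v :: "nat \<Rightarrow> nat \<Rightarrow> nat" where
  "succ_v n u = (u + 1) mod n"

definition pred_v :: "nat \<Rightarrow> nat \<Rightarrow> nat" where
  "pred_v n u = (u + n - 1) mod n"

definition M1_free :: "nat \<Rightarrow> nat set set \<Rightarrow> bool" where
  "M1_free n H \<longleftrightarrow> \<not> (\<exists>h1\<in>H. \<exists>h2\<in>H. \<exists>u<n. \<exists>u'<n. u \<noteq> u' \<and>
       h1 \<subseteq> cint n u u' \<and> h2 \<inter> cint n u u' = {})"

definition M1_saturated :: "nat \<Rightarrow> nat \<Rightarrow> nat set set \<Rightarrow> bool" where
  "M1_saturated n r H \<longleftrightarrow>
     H \<subseteq> {e. e \<subseteq> cyc_vertices n \<and> card e = r} \<and> M1_free n H \<and>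
     (\<forall>e. e \<subseteq> cyc_vertices n \<and> card e = r \<and> e \<notin> H \<longrightarrow> \<not> M1_free n (insert e H))"

definition lam :: "nat \<Rightarrow> nat set set \<Rightarrow> nat \<Rightarrow> nat" where
  "lam n H v = (THE u. u < n \<and>
      (\<exists>h\<in>H. v \<in> h \<and> h \<subseteq> cint n u v) \<and>
      \<not> (\<exists>h\<in>H. v \<in> h \<and> h \<subseteq> cint n (succ_v n u) v))"

definition rho :: "nat \<Rightarrow> nat set set \<Rightarrow> nat \<Rightarrow> nat" where
  "rho n H v = (THE u. u < n \<and>
      (\<exists>h\<in>H. v \<in> h \<and> h \<subseteq> cint n v u) \<and>
      \<not> (\<exists>h\<in>H. v \<in> h \<and> h \<subseteq> cint n v (pred_v n u)))"

end

theory Submission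
  imports Defs
begin


definition dd :: "nat \<Rightarrow> nat \<Rightarrow> nat \<Rightarrow> nat" where
  "dd n a b = (b + n - a) mod n"

lemma dd_eq: "a < n \<Longrightarrow> b < n \<Longrightarrow> dd n a b = (if a \<le> b then b - a else b + n - a)"
proof -
  assume a: "a < n" and b: "b < n"
  show ?thesis
  proof (cases "a \<le> b")
    case True
    then have "b + n - a = (b - a) + n" by simp
    then have "(b + n - a) mod n = (b - a) mod n" by (metis mod_add_self2)
    then show ?thesis using True b unfolding dd_def by simp
  next
    case False
    then show ?thesis using a b unfolding dd_def by simp
  qed
qed

lemma succ_eq: "u < n \<Longrightarrow> succ_v n u = (if u + 1 = n then 0 else u + 1)"
  unfolding succ_v_def by auto

lemma pred_eq: "u < n \<Longrightarrow> pred_v n u = (if u = 0 then n - 1 else u - 1)"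
proof (cases "u = 0")
  case False
  assume u: "u < n"
  have "u + n - 1 = (u - 1) + n" using False by simp
  then have "(u + n - 1) mod n = (u - 1) mod n" by (metis mod_add_self2)
  then show ?thesis using False u unfolding pred_v_def by simp
qed (auto simp: pred_v_def)

lemma cint_iff: "u < n \<Longrightarrow> w < n \<Longrightarrow> x \<in> cint n u w \<longleftrightarrow> x < n \<and> dd n u x \<le> dd n u w"
proof
  assume u: "u < n" and w: "w < n" and "x \<in> cint n u w"
  then obtain k where x: "x = (u + k) mod n" and k: "k \<le> dd n u w" unfolding cint_def dd_def by auto
  have kn: "k < n" using k u unfolding dd_def
    by (meson le_less_trans mod_less_divisor not_le not_less0 order.strict_trans1) 
  have "x < n" using x u by simp
  moreover have "dd n u x = k"
  proof (cases "u + k < n")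
    case True
    then show ?thesis using x u unfolding dd_eq[OF u \<open>x < n\<close>] by simp
  next
    case False
    then have "x = u + k - n" using x kn u by (simp add: mod_if)
    then show ?thesis using False u kn \<open>x<n\<close> unfolding dd_eq[OF u \<open>x < n\<close>] by auto
  qed
  ultimately show "x < n \<and> dd n u x \<le> dd n u w" using k by simp
next
  assume u: "u < n" and w: "w < n" and "x < n \<and> dd n u x \<le> dd n u w"
  then have x: "x < n" and le: "dd n u x \<le> dd n u w" by auto
  have "(u + dd n u x) mod n = x" unfolding dd_eq[OF u x] using u x by (auto simp: mod_if)
  then have "x = (u + dd n u x) mod n \<and> dd n u x \<le> (w + n - u) mod n" using le by (simp add: dd_def)
  then show "x \<in> cint n u w" unfolding cint_def by blast
qed

lemmas ddE = dd_eq succ_eq pred_eq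



lemma dd_char: "a < n \<Longrightarrow> b < n \<Longrightarrow> dd n a b < n \<and> ((dd n a b + a = b \<and> a \<le> b) \<or> (dd n a b + a = b + n \<and> b < a))"
  by (auto simp: dd_eq)

lemma succ_char: "u < n \<Longrightarrow> succ_v n u < n \<and> ((u + 1 = n \<and> succ_v n u = 0) \<or> (u + 1 < n \<and> succ_v n u = u + 1))"
  by (auto simp: succ_eq)
lemma pred_char: "u < n \<Longrightarrow> pred_v n u < n \<and> ((u = 0 \<and> pred_v n u + 1 = n) \<or> (0 < u \<and> pred_v n u + 1 = u))"
  by (auto simp: pred_eq)

lemma succ_lt: "u < n \<Longrightarrow> succ_v n u < n" by (simp add: succ_v_def)
lemma pred_lt: "u < n \<Longrightarrow> pred_v n u < n" by (simp add: pred_v_def)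

lemma dd_succL: assumes "u < n" "w < n" "u \<noteq> w" shows "dd n (succ_v n u) w + 1 = dd n u w"
  using assms succ_char[OF assms(1)] dd_char[OF succ_lt[OF assms(1)] assms(2)] dd_char[OF assms(1,2)]
  by (elim conjE disjE; linarith)

lemma dd_predR: assumes "u < n" "w < n" "u \<noteq> w" shows "dd n u (pred_v n w) + 1 = dd n u w"
  using assms pred_char[OF assms(2)] dd_char[OF assms(1) pred_lt[OF assms(2)]] dd_char[OF assms(1,2)]
  by (elim conjE disjE; linarith)

lemma dd_succR: assumes "u < n" "w < n" "succ_v n w \<noteq> u" shows "dd n u (succ_v n w) = dd n u w + 1"
  using assms succ_char[OF assms(2)] dd_char[OF assms(1) succ_lt[OF assms(2)]] dd_char[OF assms(1,2)]
  by (elim conjE disjE; linarith)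

lemma dd_predL: assumes "u < n" "w < n" "pred_v n u \<noteq> w" shows "dd n (pred_v n u) w = dd n u w + 1"
  using assms pred_char[OF assms(1)] dd_char[OF pred_lt[OF assms(1)] assms(2)] dd_char[OF assms(1,2)]
  by (elim conjE disjE; linarith)

lemma dd_flip: assumes "a < n" "b < n" "a \<noteq> b" shows "dd n a b + dd n b a = n"
  using assms dd_char[OF assms(1,2)] dd_char[OF assms(2,1)]
  by (elim conjE disjE; linarith)

lemma succ_pred: assumes "u < n" shows "succ_v n (pred_v n u) = u"
  using assms pred_char[OF assms] succ_char[OF pred_lt[OF assms]] by (elim conjE disjE; linarith)
lemma pred_succ: assumes "u < n" shows "pred_v n (succ_v n u) = u"
  using assms succ_char[OF assms] pred_char[OF succ_lt[OF assms]] by (elim conjE disjE; linarith)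

lemma cint_iff2: assumes "u < n" "w < n" shows "x \<in> cint n u w \<longleftrightarrow> x < n \<and> dd n x w \<le> dd n u w"
proof (cases "x < n")
  case True
  show ?thesis unfolding cint_iff[OF assms] using True assms dd_char[OF assms(1) True] dd_char[OF True assms(2)] dd_char[OF assms]
    by (intro iffI; elim conjE disjE; (intro conjI)?; linarith)
qed (simp add: cint_iff[OF assms])



lemma cint_lin: "u < n \<Longrightarrow> w < n \<Longrightarrow> x \<in> cint n u w \<longleftrightarrow> x < n \<and> (if u \<le> w then u \<le> x \<and> x \<le> w else u \<le> x \<or> x \<le> w)"
  by (auto simp: cint_iff dd_eq split: if_splits)


lemma cint_sub: "u < n \<Longrightarrow> w < n \<Longrightarrow> cint n u w \<subseteq> {..<n}"
  by (auto simp: cint_lin)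

lemma cint_start: "u < n \<Longrightarrow> w < n \<Longrightarrow> u \<in> cint n u w"
  by (auto simp: cint_lin)

lemma cint_end: "u < n \<Longrightarrow> w < n \<Longrightarrow> w \<in> cint n u w"
  by (auto simp: cint_lin)

lemma cint_same: "u < n \<Longrightarrow> cint n u u = {u}"
  by (auto simp: cint_lin)

lemma cint_full: "v < n \<Longrightarrow> cint n v (pred_v n v) = {..<n}"
  by (auto simp: cint_lin pred_eq pred_lt)

lemma cint_full2: "v < n \<Longrightarrow> cint n (succ_v n v) v = {..<n}"
  by (auto simp: cint_lin succ_eq succ_lt)


lemma dd_inj1: "a < n \<Longrightarrow> b < n \<Longrightarrow> c < n \<Longrightarrow> dd n a b = dd n a c \<Longrightarrow> b = c"
  by (auto simp: dd_eq split: if_splits)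

lemma dd_inj2: "a < n \<Longrightarrow> b < n \<Longrightarrow> c < n \<Longrightarrow> dd n b a = dd n c a \<Longrightarrow> b = c"
  by (auto simp: dd_eq split: if_splits)

lemma dd_lt: "a < n \<Longrightarrow> b < n \<Longrightarrow> dd n a b < n"
  by (auto simp: dd_eq)

lemma dd_zero: "a < n \<Longrightarrow> dd n a a = 0"
  by (auto simp: dd_eq)

lemma dd_pos: "a < n \<Longrightarrow> b < n \<Longrightarrow> a \<noteq> b \<Longrightarrow> 0 < dd n a b"
  by (auto simp: dd_eq)


lemma arc_avoid:
  assumes "u < n" "u' < n" "p < n" "q < n" "c < n"
    "p \<in> cint n u u'" "q \<in> cint n u u'" "c \<notin> cint n u u'"
    "c \<in> cint n q p" "c \<noteq> q" "c \<noteq> p"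
  shows "cint n p q \<subseteq> cint n u u'"
proof
  fix x assume "x \<in> cint n p q"
  then show "x \<in> cint n u u'" using assms unfolding cint_lin[OF assms(1,2)] cint_lin[OF assms(4,3)] cint_lin[OF assms(3,4)]
    by (auto split: if_splits)
qed


lemma compl:
  assumes "u < n" "u' < n" "x < n" "y < n" "x \<notin> cint n u u'"
  shows "y \<in> cint n (succ_v n u') (pred_v n u) \<longleftrightarrow> y \<notin> cint n u u'"
proof -
  define s where "s = succ_v n u'"
  define q where "q = pred_v n u"
  have s: "s < n" "s = (if u' + 1 = n then 0 else u' + 1)" unfolding s_def using assms by (auto simp: succ_lt succ_eq)
  have q: "q < n" "q = (if u = 0 then n - 1 else u - 1)" unfolding q_def using assms by (auto simp: pred_lt pred_eq)
  show ?thesis unfolding s_def[symmetric] q_def[symmetric] cint_lin[OF s(1) q(1)] cint_lin[OF assms(1,2)]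
    using assms(3,4) assms(5)[unfolded cint_lin[OF assms(1,2)]] s q by (auto split: if_splits)
qed

lemma disj:
  assumes "p < n" "q < n" "s < n" "t < n" "dd n p q < dd n p s" "dd n p s \<le> dd n p t"
  shows "cint n p q \<inter> cint n s t = {}"
proof -
  { fix x assume x: "x \<in> cint n p q" "x \<in> cint n s t"
    then have xn: "x < n" by (simp add: cint_iff[OF assms(1,2)])
    have "dd n p x \<le> dd n p q" "dd n s x \<le> dd n s t" using x assms by (auto simp: cint_iff)
    then have False using assms dd_char[OF assms(1) xn] dd_char[OF assms(3) xn] dd_char[OF assms(1,2)]
      dd_char[OF assms(1,3)] dd_char[OF assms(1,4)] dd_char[OF assms(3,4)]
      by (elim conjE disjE; linarith) }
  then show ?thesis by blast
qed


lemma dd_rel: assumes "p < n" "a < n" "b < n"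
  shows "dd n a b = (if dd n p a \<le> dd n p b then dd n p b - dd n p a else dd n p b + n - dd n p a)"
  using assms dd_char[OF assms(1,2)] dd_char[OF assms(1,3)] dd_char[OF assms(2,3)]
  by (elim conjE disjE; simp; linarith)

lemma rot:
  assumes "p < n" "a < n" "b < n" "c < n" "dd n p a < dd n p b" "dd n p b < dd n p c" "a \<noteq> p"
  shows "dd n a b < dd n a c \<and> dd n a c < dd n a p"
  using assms dd_lt[OF assms(1,4)] dd_pos[OF assms(1,2)] unfolding dd_rel[OF assms(1,2,3)] dd_rel[OF assms(1,2,4)] dd_rel[OF assms(1,2,1)] dd_zero[OF assms(1)]
  by (simp, linarith)



lemma cint_ho_iff: "u < n \<Longrightarrow> w < n \<Longrightarrow> x \<in> cint_ho n u w \<longleftrightarrow> x < n \<and> dd n u x < dd n u w"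
proof
  assume u: "u < n" and w: "w < n" and "x \<in> cint_ho n u w"
  then obtain k where x: "x = (u + k) mod n" and k: "k < dd n u w" unfolding cint_ho_def dd_def by auto
  have kn: "k < n" using k dd_lt[OF u w] by linarith
  have "x < n" using x u by simp
  moreover have "dd n u x = k"
  proof (cases "u + k < n")
    case True
    then show ?thesis using x u unfolding dd_eq[OF u \<open>x < n\<close>] by simp
  next
    case False
    then have "x = u + k - n" using x kn u by (simp add: mod_if)
    then show ?thesis using False u kn \<open>x<n\<close> unfolding dd_eq[OF u \<open>x < n\<close>] by auto
  qed
  ultimately show "x < n \<and> dd n u x < dd n u w" using k by simp
next
  assume u: "u < n" and w: "w < n" and "x < n \<and> dd n u x < dd n u w"
  then have x: "x < n" and le: "dd n u x < dd n u w" by auto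
  have "(u + dd n u x) mod n = x" unfolding dd_eq[OF u x] using u x by (auto simp: mod_if)
  then have "x = (u + dd n u x) mod n \<and> dd n u x < (w + n - u) mod n" using le by (simp add: dd_def)
  then show "x \<in> cint_ho n u w" unfolding cint_ho_def by blast
qed


lemma cint_pred_end: assumes "v < n" "z < n" "z \<noteq> v" shows "cint n v z \<subseteq> insert z (cint n v (pred_v n z))"
proof
  fix x assume x: "x \<in> cint n v z"
  then have xn: "x < n" and le: "dd n v x \<le> dd n v z" using assms by (auto simp: cint_iff)
  show "x \<in> insert z (cint n v (pred_v n z))"
  proof (cases "x = z")
    case False
    then have "dd n v x \<noteq> dd n v z" using dd_inj1[OF assms(1) xn assms(2)] by blast
    then show ?thesis using le dd_predR[OF assms(1,2)] assms xn by (simp add: cint_iff pred_lt)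
  qed simp
qed

lemma notin_pred: assumes "v < n" "z < n" "z \<noteq> v" "x < n" "x \<notin> cint n v (pred_v n z)" shows "dd n v z \<le> dd n v x"
  using assms dd_predR[OF assms(1,2)] by (simp add: cint_iff pred_lt)

lemma in_arc_back: assumes "v < n" "z < n" "q < n" "z \<noteq> v" "dd n v z < dd n v q" shows "q \<in> cint n z v"
proof -
  have "q \<noteq> v" using assms dd_zero by auto
  then show ?thesis using assms dd_flip[OF assms(1,3)] dd_flip[OF assms(1,2)] by (simp add: cint_iff2)
qed

lemma cint_mono_end: assumes "u < n" "u' < n" "v < n" "dd n u v \<le> dd n u' v" shows "cint n u v \<subseteq> cint n u' v"
  using assms by (auto simp: cint_iff2)

lemma cint_mono_start: assumes "u < n" "u' < n" "v < n" "dd n v u \<le> dd n v u'" shows "cint n v u \<subseteq> cint n v u'"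
  using assms by (auto simp: cint_iff)

lemma cint_succ_start: assumes "y < n" "v < n" "y \<noteq> v" shows "cint n y v \<subseteq> insert y (cint n (succ_v n y) v)"
proof
  fix x assume x: "x \<in> cint n y v"
  then have xn: "x < n" and le: "dd n x v \<le> dd n y v" using assms by (auto simp: cint_iff2)
  show "x \<in> insert y (cint n (succ_v n y) v)"
  proof (cases "x = y")
    case False
    then have "dd n x v \<noteq> dd n y v" using dd_inj2[OF assms(2) xn assms(1)] by blast
    then show ?thesis using le dd_succL[OF assms(1,2,3)] assms xn by (simp add: cint_iff2 succ_lt)
  qed simp
qed

lemma notin_succ_start: assumes "a < n" "b < n" "a \<noteq> b" shows "a \<notin> cint n (succ_v n a) b"
  using assms dd_succL[OF assms] dd_pos[OF assms] by (simp add: cint_iff2 succ_lt)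

lemma notin_pred_end: assumes "a < n" "b < n" "a \<noteq> b" shows "b \<notin> cint n a (pred_v n b)"
  using assms dd_predR[OF assms] dd_pos[OF assms] by (simp add: cint_iff pred_lt)

lemma in_succ_end: assumes "v < n" "y < n" "y \<noteq> v" "succ_v n y \<noteq> v" shows "y \<in> cint n v (succ_v n y)"
  using assms dd_succR[OF assms(1,2,4)] by (simp add: cint_iff succ_lt)

lemma in_pred_start: assumes "v < n" "z < n" "z \<noteq> v" "pred_v n z \<noteq> v" shows "z \<in> cint n (pred_v n z) v"
  using assms dd_predL[OF assms(2,1,4)] by (simp add: cint_iff2 pred_lt)

lemma sub_b8: assumes "y < n" "v < n" "y \<noteq> v" "succ_v n v \<noteq> y" shows "cint n (succ_v n y) v \<subseteq> cint n y (succ_v n v)"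
proof
  fix x assume x: "x \<in> cint n (succ_v n y) v"
  then have xn: "x < n" and le: "dd n (succ_v n y) x \<le> dd n (succ_v n y) v" using assms by (auto simp: cint_iff succ_lt)
  have "x \<noteq> y" using x notin_succ_start[OF assms(1,2,3)] by blast
  then show "x \<in> cint n y (succ_v n v)" using le dd_succL[OF assms(1) xn] dd_succL[OF assms(1,2,3)] dd_succR[OF assms(1,2,4)] assms xn
    by (simp add: cint_iff succ_lt)
qed

lemma sub_c8: assumes "z < n" "v < n" "z \<noteq> v" "pred_v n v \<noteq> z" shows "cint n v (pred_v n z) \<subseteq> cint n (pred_v n v) z"
proof
  fix x assume x: "x \<in> cint n v (pred_v n z)"
  then have xn: "x < n" and le: "dd n x (pred_v n z) \<le> dd n v (pred_v n z)" using assms by (auto simp: cint_iff2 pred_lt)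
  have "x \<noteq> z" using x notin_pred_end[OF assms(2,1)] assms(3) by blast
  then show "x \<in> cint n (pred_v n v) z" using le dd_predR[OF xn assms(1)] dd_predR[OF assms(2,1)] dd_predL[OF assms(2,1,4)] assms xn
    by (simp add: cint_iff2 pred_lt)
qed

lemma compl_succ: assumes "y < n" "v < n" "y \<noteq> v" "x < n"
  shows "x \<in> cint n (succ_v n v) y \<longleftrightarrow> x \<notin> cint n (succ_v n y) v"
  using compl[OF succ_lt[OF assms(1)] assms(2) assms(1) assms(4) notin_succ_start[OF assms(1,2,3)]] pred_succ[OF assms(1)] by simp

lemma compl_pred: assumes "z < n" "v < n" "z \<noteq> v" "x < n"
  shows "x \<in> cint n z (pred_v n v) \<longleftrightarrow> x \<notin> cint n v (pred_v n z)"
  using compl[OF assms(2) pred_lt[OF assms(1)] assms(1) assms(4) notin_pred_end[OF assms(2,1)]] succ_pred[OF assms(1)] assms(3) by simp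

lemma sub_e1: assumes "y < n" "v < n" "y \<noteq> v" shows "cint n (succ_v n v) y \<subseteq> cint n v y"
  using cint_mono_end[OF succ_lt[OF assms(2)] assms(2) assms(1)] dd_succL[OF assms(2,1)] assms by simp



lemma Iv_char: assumes "v < n" "a < n" "b < n" "x < n" "a \<noteq> v" "b \<noteq> v" "dd n v a \<le> dd n v b"
  shows "x \<in> cint n a b \<longleftrightarrow> x \<noteq> v \<and> dd n v a \<le> dd n v x \<and> dd n b v \<le> dd n x v"
proof (cases "x = v")
  case True
  have "dd n a v = n - dd n v a" "dd n a b = dd n v b - dd n v a"
    using dd_flip[OF assms(1,2)] assms dd_rel[OF assms(1,2,3)] by auto
  moreover have "dd n v b < n" using dd_lt assms by auto
  ultimately show ?thesis using True assms by (simp add: cint_iff)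
next
  case False
  have f: "dd n b v = n - dd n v b" "dd n x v = n - dd n v x" "dd n a b = dd n v b - dd n v a"
    using dd_flip[OF assms(1,3)] dd_flip[OF assms(1,4)] assms False dd_rel[OF assms(1,2,3)] by auto
  have g: "dd n a x = (if dd n v a \<le> dd n v x then dd n v x - dd n v a else dd n v x + n - dd n v a)"
    using dd_rel[OF assms(1,2,4)] .
  have l: "dd n v b < n" "dd n v x < n" using dd_lt assms by auto
  show ?thesis using False assms l unfolding cint_iff[OF assms(2,3)] f g by auto
qed

lemma f1: assumes "v < n" "y < n" "z < n" "x < n" "z \<noteq> v" "y \<noteq> v" "dd n v z < dd n v y" "x \<in> cint n y v"
  shows "x \<notin> cint n (succ_v n v) z"
proof
  assume x: "x \<in> cint n (succ_v n v) z"
  have "x \<noteq> v" using x notin_succ_start[OF assms(1,3)] assms(5) by metis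
  then have d: "dd n (succ_v n v) x + 1 = dd n v x" "dd n (succ_v n v) z + 1 = dd n v z"
    using dd_succL assms by auto
  have "dd n (succ_v n v) x \<le> dd n (succ_v n v) z" using x assms by (simp add: cint_iff succ_lt)
  then have "dd n v x < dd n v y" using d assms by linarith
  moreover have "dd n y x \<le> dd n y v" using assms(8) assms by (simp add: cint_iff)
  moreover have "dd n y x = (if dd n v y \<le> dd n v x then dd n v x - dd n v y else dd n v x + n - dd n v y)"
    using dd_rel[OF assms(1,2,4)] .
  moreover have "dd n y v = n - dd n v y" using dd_flip[OF assms(1,2)] assms by auto
  moreover have "0 < dd n v x" using dd_pos assms \<open>x \<noteq> v\<close> by auto
  moreover have "dd n v y < n" using dd_lt assms by auto
  ultimately show False by (auto split: if_splits; linarith)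
qed

lemma f4: assumes "v < n" "y < n" "z < n" "x < n" "z \<noteq> v" "y \<noteq> v" "dd n v z < dd n v y" "x \<in> cint n y v"
  shows "x \<notin> cint n z (pred_v n y)"
proof
  assume x: "x \<in> cint n z (pred_v n y)"
  have zy: "z \<noteq> y" using assms by auto
  have "dd n z x \<le> dd n z (pred_v n y)" using x assms by (simp add: cint_iff pred_lt)
  moreover have "dd n z (pred_v n y) + 1 = dd n z y" using dd_predR[OF assms(3,2) zy] .
  moreover have "dd n z x = (if dd n v z \<le> dd n v x then dd n v x - dd n v z else dd n v x + n - dd n v z)"
    using dd_rel[OF assms(1,3,4)] .
  moreover have "dd n z y = dd n v y - dd n v z"
    using dd_rel[OF assms(1,3,2)] assms by simp
  moreover have "dd n y x \<le> dd n y v" using assms(8) assms by (simp add: cint_iff)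
  moreover have "dd n y x = (if dd n v y \<le> dd n v x then dd n v x - dd n v y else dd n v x + n - dd n v y)"
    using dd_rel[OF assms(1,2,4)] .
  moreover have "dd n y v = n - dd n v y" using dd_flip[OF assms(1,2)] assms by auto
  moreover have "dd n v x < n" "dd n v y < n" using dd_lt assms by auto
  moreover have "0 < dd n v z" using dd_pos assms by auto
  ultimately show False using assms(7) by (auto split: if_splits; linarith)
qed

lemma f5: assumes "v < n" "y < n" "z < n" "m < n" "z \<noteq> v" "y \<noteq> v" "dd n v z < dd n v y"
  "dd n z (pred_v n y) < dd n z m" "dd n z m \<le> dd n z (pred_v n v)"
  shows "m \<in> cint_ho n y v"
proof -
  have zy: "z \<noteq> y" using assms by auto
  have a: "dd n z (pred_v n y) + 1 = dd n z y" using dd_predR[OF assms(3,2) zy] .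
  have b: "dd n z (pred_v n v) + 1 = dd n z v" using dd_predR[OF assms(3,1,5)] .
  have c: "dd n z y = dd n v y - dd n v z" "dd n z v = n - dd n v z"
    using dd_rel[OF assms(1,3,2)] dd_flip[OF assms(1,3)] assms by auto
  have d: "dd n z m = (if dd n v z \<le> dd n v m then dd n v m - dd n v z else dd n v m + n - dd n v z)"
    using dd_rel[OF assms(1,3,4)] .
  have e: "dd n y m = (if dd n v y \<le> dd n v m then dd n v m - dd n v y else dd n v m + n - dd n v y)"
    using dd_rel[OF assms(1,2,4)] .
  have f: "dd n y v = n - dd n v y" using dd_flip[OF assms(1,2)] assms by auto
  have l: "dd n v m < n" "dd n v y < n" using dd_lt assms by auto
  have "dd n y m < dd n y v" using assms(7,8,9) a b c d e f l by (auto split: if_splits; linarith)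
  then show ?thesis using assms by (simp add: cint_ho_iff)
qed



locale sat =
  fixes n r :: nat and H :: "nat set set"
  assumes r2: "r \<ge> 2" and nr: "n \<ge> 2 * r" and S: "M1_saturated n r H"
begin

definition blk :: "nat set \<Rightarrow> bool" where
  "blk A \<longleftrightarrow> (\<forall>h\<in>H. h \<inter> A \<noteq> {})"

lemma n4: "n \<ge> 4" using r2 nr by linarith

lemma cv: "cyc_vertices n = {..<n}" unfolding cyc_vertices_def by auto

lemma edge_sub: "h \<in> H \<Longrightarrow> h \<subseteq> {..<n}"
  using S unfolding M1_saturated_def cv by auto

lemma edge_card: "h \<in> H \<Longrightarrow> card h = r"
  using S unfolding M1_saturated_def by auto

lemma edge_fin: assumes "h \<in> H" shows "finite h"
proof -
  have "0 < card h" using edge_card[OF assms] r2 by simp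
  then show ?thesis by (simp add: card_gt_0_iff)
qed

lemma free: "M1_free n H" using S unfolding M1_saturated_def by auto

lemma card_small: assumes "h \<in> H" "h \<subseteq> A" "finite A" "card A < r" shows False
  using edge_card[OF assms(1)] card_mono[OF assms(3,2)] assms(4) by simp

lemma edge_single: "h \<in> H \<Longrightarrow> h \<subseteq> {x} \<Longrightarrow> False"
  using card_small[of h "{x}"] r2 by simp

lemma edge_ne: "h \<in> H \<Longrightarrow> h \<noteq> {}"
  using edge_single by blast

lemma edge_blk: assumes "h \<in> H" "u < n" "u' < n" "h \<subseteq> cint n u u'" shows "blk (cint n u u')"
proof (cases "u = u'")
  case True
  then show ?thesis using assms edge_single cint_same by metis
next
  case False
  then show ?thesis using free assms unfolding M1_free_def blk_def by blast
qed

lemma blk_mono: "blk A \<Longrightarrow> A \<subseteq> B \<Longrightarrow> blk B"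
  unfolding blk_def by blast

lemma add:
  assumes e: "e \<subseteq> {..<n}" "card e = r"
    and arcs: "\<And>u u'. u < n \<Longrightarrow> u' < n \<Longrightarrow> u \<noteq> u' \<Longrightarrow> e \<subseteq> cint n u u' \<Longrightarrow> blk (cint n u u')"
  shows "e \<in> H"
proof (rule ccontr)
  assume nH: "e \<notin> H"
  have "0 < card e" using e r2 by simp
  then have fe: "finite e" and ne: "e \<noteq> {}" by (simp_all add: card_gt_0_iff)
  have "\<not> M1_free n (insert e H)" using S nH e unfolding M1_saturated_def cv by auto
  then obtain h1 h2 u u' where h: "h1 \<in> insert e H" "h2 \<in> insert e H" "u < n" "u' < n" "u \<noteq> u'"
    "h1 \<subseteq> cint n u u'" "h2 \<inter> cint n u u' = {}" unfolding M1_free_def by blast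
  show False
  proof (cases "h1 = e")
    case True
    show False
    proof (cases "h2 = e")
      case True
      then show False using \<open>h1 = e\<close> h ne by blast
    next
      case False
      then have "h2 \<in> H" using h by auto
      then show False using arcs[OF h(3,4,5)] h \<open>h1 = e\<close> unfolding blk_def by blast
    qed
  next
    case False
    then have h1H: "h1 \<in> H" using h by auto
    show False
    proof (cases "h2 = e")
      case False
      then have "h2 \<in> H" using h by auto
      then show False using free h h1H unfolding M1_free_def by blast
    next
      case True
      obtain x where x: "x \<in> e" using ne by blast
      then have xn: "x < n" "x \<notin> cint n u u'" using e h True by auto
      let ?C = "cint n (succ_v n u') (pred_v n u)"
      have eC: "e \<subseteq> ?C"
      proof
        fix y assume y: "y \<in> e"
        have yn: "y < n" using e y by auto
        have "y \<notin> cint n u u'" using y h(7) True by blast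
        then show "y \<in> ?C" using compl[OF h(3,4) xn(1) yn xn(2)] by simp
      qed
      show False
      proof (cases "succ_v n u' = pred_v n u")
        case True
        then have "e \<subseteq> {pred_v n u}" using eC cint_same[OF pred_lt[OF h(3)]] by simp
        then have "card e \<le> card {pred_v n u}" using card_mono[of "{pred_v n u}" e] by simp
        then have "card e \<le> 1" by simp
        then show False using e r2 by simp
      next
        case False
        have "blk ?C" using arcs[OF succ_lt[OF h(4)] pred_lt[OF h(3)] False eC] .
        moreover have "h1 \<inter> ?C = {}"
        proof -
          { fix y assume y: "y \<in> h1" "y \<in> ?C"
            have yn: "y < n" using y edge_sub[OF h1H] by auto
            have "y \<in> cint n u u'" using y h(6) by blast
            then have False using compl[OF h(3,4) xn(1) yn xn(2)] y by simp }
          then show ?thesis by blast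
        qed
        ultimately show False using h1H unfolding blk_def by blast
      qed
    qed
  qed
qed

lemma Hne: "H \<noteq> {}"
proof
  assume H0: "H = {}"
  have "{..<r} \<in> H"
  proof (rule add)
    show "{..<r} \<subseteq> {..<n}" using nr by auto
  next
    have "\<And>A. blk A" unfolding blk_def using H0 by simp
    then show "\<And>u u'. u < n \<Longrightarrow> u' < n \<Longrightarrow> u \<noteq> u' \<Longrightarrow> {..<r} \<subseteq> cint n u u' \<Longrightarrow> blk (cint n u u')" by blast
  qed (auto simp: H0)
  then show False using H0 by simp
qed

lemma blk_full: "blk {..<n}"
  unfolding blk_def using edge_sub edge_ne by blast

lemma edge_two: assumes "h \<in> H" "z \<in> h" obtains x where "x \<in> h" "x \<noteq> z"
  using edge_single[OF assms(1), of z] by blast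

lemma obtain_max: assumes "h \<in> H" obtains q where "q \<in> h" "\<And>x. x \<in> h \<Longrightarrow> f x \<le> (f q :: nat)"
proof -
  have fin: "finite (f ` h)" using edge_fin[OF assms] by simp
  have ne: "f ` h \<noteq> {}" using edge_ne[OF assms] by simp
  have "Max (f ` h) \<in> f ` h" using Max_in[OF fin ne] .
  then obtain q where q: "q \<in> h" "f q = Max (f ` h)" by auto
  have "\<And>x. x \<in> h \<Longrightarrow> f x \<le> f q" using Max_ge[OF fin] q(2) by simp
  then show ?thesis using that q(1) by blast
qed

lemma card_swap: assumes "h \<in> H" "q \<in> h" "w \<notin> h" shows "card (insert w (h - {q})) = r"
proof -
  have "finite h" using edge_fin[OF assms(1)] .
  then have "card (h - {q}) = r - 1" using edge_card[OF assms(1)] assms(2) by simp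
  moreover have "w \<notin> h - {q}" using assms(3) by blast
  ultimately show ?thesis using \<open>finite h\<close> r2 by simp
qed

lemma cover: assumes v: "v < n" shows "\<exists>h\<in>H. v \<in> h"
proof (rule ccontr)
  assume nc: "\<not> (\<exists>h\<in>H. v \<in> h)"
  have S0: "pred_v n v < n \<and> blk (cint n v (pred_v n v))" using cint_full[OF v] blk_full pred_lt[OF v] by simp
  obtain z where Sz: "z < n \<and> blk (cint n v z)" and zmin: "\<And>w. w < n \<and> blk (cint n v w) \<Longrightarrow> dd n v z \<le> dd n v w"
    using ex_has_least_nat[of "\<lambda>w. w < n \<and> blk (cint n v w)" "pred_v n v" "dd n v"] S0 by blast
  then have zn: "z < n" and bz: "blk (cint n v z)" by auto
  have zv: "z \<noteq> v"
  proof
    assume "z = v"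
    then have b: "blk {v}" using bz cint_same[OF v] by simp
    obtain h where "h \<in> H" using Hne by blast
    then show False using b nc unfolding blk_def by blast
  qed
  have "\<not> blk (cint n v (pred_v n z))"
  proof
    assume b: "blk (cint n v (pred_v n z))"
    have "dd n v z \<le> dd n v (pred_v n z)" using zmin[of "pred_v n z"] b pred_lt[OF zn] by blast
    then show False using dd_predR[OF v zn zv[symmetric]] by linarith
  qed
  then obtain g where gH: "g \<in> H" and g0: "g \<inter> cint n v (pred_v n z) = {}" unfolding blk_def by blast
  have vg: "v \<notin> g" using nc gH by blast
  have gn: "g \<subseteq> {..<n}" using edge_sub[OF gH] .
  have zg: "z \<in> g"
  proof -
    obtain x where "x \<in> g" "x \<in> cint n v z" using bz gH unfolding blk_def by blast
    then show ?thesis using cint_pred_end[OF v zn zv] g0 by blast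
  qed
  have gd: "dd n v z \<le> dd n v x" if "x \<in> g" for x
  proof -
    have "x < n" "x \<notin> cint n v (pred_v n z)" using that gn g0 by auto
    then show ?thesis using notin_pred[OF v zn zv] by blast
  qed
  obtain q where qg: "q \<in> g" and qmax: "\<And>x. x \<in> g \<Longrightarrow> dd n v x \<le> dd n v q"
    using obtain_max[OF gH, of "dd n v"] by blast
  have qn: "q < n" using qg gn by auto
  obtain x where x: "x \<in> g" "x \<noteq> z" using edge_two[OF gH zg] by blast
  have xn: "x < n" using x gn by auto
  have "dd n v x \<noteq> dd n v z" using dd_inj1[OF v xn zn] x(2) by blast
  then have dzq: "dd n v z < dd n v q" using gd[OF x(1)] qmax[OF x(1)] by linarith
  then have qz: "q \<noteq> z" by auto
  have qv: "q \<noteq> v" using qg vg by blast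
  define e where "e = insert v (g - {q})"
  have ce: "card e = r" unfolding e_def using card_swap[OF gH qg vg] .
  have en: "e \<subseteq> {..<n}" unfolding e_def using gn v by auto
  have "e \<in> H"
  proof (rule add[OF en ce])
    fix u u' assume uu: "u < n" "u' < n" "u \<noteq> u'" "e \<subseteq> cint n u u'"
    show "blk (cint n u u')"
    proof (cases "q \<in> cint n u u'")
      case True
      then have "g \<subseteq> cint n u u'" using uu(4) unfolding e_def by blast
      then show ?thesis using edge_blk[OF gH uu(1,2)] by blast
    next
      case False
      have a: "v \<in> cint n u u'" "z \<in> cint n u u'" using uu(4) zg qz unfolding e_def by auto
      have "cint n v z \<subseteq> cint n u u'"
        using arc_avoid[OF uu(1,2) v zn qn a False in_arc_back[OF v zn qn zv dzq] qz qv] .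
      then show ?thesis using blk_mono bz by blast
    qed
  qed
  then show False using nc unfolding e_def by blast
qed

definition PL :: "nat \<Rightarrow> nat \<Rightarrow> bool" where
  "PL v u \<longleftrightarrow> (\<exists>h\<in>H. v \<in> h \<and> h \<subseteq> cint n u v)"
definition PR :: "nat \<Rightarrow> nat \<Rightarrow> bool" where
  "PR v u \<longleftrightarrow> (\<exists>h\<in>H. v \<in> h \<and> h \<subseteq> cint n v u)"

lemma PL_mono: assumes "u < n" "u' < n" "v < n" "PL v u" "dd n u v \<le> dd n u' v" shows "PL v u'"
  using assms cint_mono_end[OF assms(1,2,3,5)] unfolding PL_def by blast
lemma PR_mono: assumes "u < n" "u' < n" "v < n" "PR v u" "dd n v u \<le> dd n v u'" shows "PR v u'"
  using assms cint_mono_start[OF assms(1,2,3,5)] unfolding PR_def by blast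
lemma PL_self: "v < n \<Longrightarrow> \<not> PL v v"
  unfolding PL_def using cint_same edge_single by metis
lemma PR_self: "v < n \<Longrightarrow> \<not> PR v v"
  unfolding PR_def using cint_same edge_single by metis
lemma PL_full: assumes "v < n" shows "PL v (succ_v n v)"
  using cover[OF assms] edge_sub cint_full2[OF assms] unfolding PL_def by blast
lemma PR_full: assumes "v < n" shows "PR v (pred_v n v)"
  using cover[OF assms] edge_sub cint_full[OF assms] unfolding PR_def by blast

lemma lam_ex1: assumes v: "v < n" shows "\<exists>!u. u < n \<and> PL v u \<and> \<not> PL v (succ_v n u)"
proof -
  obtain u where Su: "u < n \<and> PL v u" and umin: "\<And>w. w < n \<and> PL v w \<Longrightarrow> dd n u v \<le> dd n w v"
    using ex_has_least_nat[of "\<lambda>w. w < n \<and> PL v w" "succ_v n v" "\<lambda>w. dd n w v"] PL_full[OF v] succ_lt[OF v] by blast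
  then have un: "u < n" and pu: "PL v u" by auto
  have uv: "u \<noteq> v" using pu PL_self[OF v] by blast
  have np: "\<not> PL v (succ_v n u)"
  proof
    assume "PL v (succ_v n u)"
    then have "dd n u v \<le> dd n (succ_v n u) v" using umin succ_lt[OF un] by blast
    then show False using dd_succL[OF un v uv] by linarith
  qed
  have uniq: "dd n u1 v = dd n u2 v" if a: "u1 < n" "PL v u1" "\<not> PL v (succ_v n u1)" "u2 < n" "PL v u2" "\<not> PL v (succ_v n u2)" for u1 u2
  proof (rule ccontr)
    assume ne: "dd n u1 v \<noteq> dd n u2 v"
    have u1v: "u1 \<noteq> v" using a(2) PL_self[OF v] by blast
    have u2v: "u2 \<noteq> v" using a(5) PL_self[OF v] by blast
    show False
    proof (cases "dd n u1 v < dd n u2 v")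
      case True
      then have "dd n u1 v \<le> dd n (succ_v n u2) v" using dd_succL[OF a(4) v u2v] by linarith
      then show False using PL_mono[OF a(1) succ_lt[OF a(4)] v a(2)] a(6) by blast
    next
      case False
      then have "dd n u2 v \<le> dd n (succ_v n u1) v" using ne dd_succL[OF a(1) v u1v] by linarith
      then show False using PL_mono[OF a(4) succ_lt[OF a(1)] v a(5)] a(3) by blast
    qed
  qed
  show ?thesis
  proof (rule ex1I[of _ u])
    show "u < n \<and> PL v u \<and> \<not> PL v (succ_v n u)" using un pu np by blast
  next
    fix u' assume "u' < n \<and> PL v u' \<and> \<not> PL v (succ_v n u')"
    then show "u' = u" using uniq[of u' u] un pu np dd_inj2[OF v] by blast
  qed
qed

lemma rho_ex1: assumes v: "v < n" shows "\<exists>!u. u < n \<and> PR v u \<and> \<not> PR v (pred_v n u)"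
proof -
  obtain u where Su: "u < n \<and> PR v u" and umin: "\<And>w. w < n \<and> PR v w \<Longrightarrow> dd n v u \<le> dd n v w"
    using ex_has_least_nat[of "\<lambda>w. w < n \<and> PR v w" "pred_v n v" "\<lambda>w. dd n v w"] PR_full[OF v] pred_lt[OF v] by blast
  then have un: "u < n" and pu: "PR v u" by auto
  have uv: "u \<noteq> v" using pu PR_self[OF v] by blast
  have np: "\<not> PR v (pred_v n u)"
  proof
    assume "PR v (pred_v n u)"
    then have "dd n v u \<le> dd n v (pred_v n u)" using umin pred_lt[OF un] by blast
    then show False using dd_predR[OF v un uv[symmetric]] by linarith
  qed
  have uniq: "dd n v u1 = dd n v u2" if a: "u1 < n" "PR v u1" "\<not> PR v (pred_v n u1)" "u2 < n" "PR v u2" "\<not> PR v (pred_v n u2)" for u1 u2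
  proof (rule ccontr)
    assume ne: "dd n v u1 \<noteq> dd n v u2"
    have u1v: "u1 \<noteq> v" using a(2) PR_self[OF v] by blast
    have u2v: "u2 \<noteq> v" using a(5) PR_self[OF v] by blast
    show False
    proof (cases "dd n v u1 < dd n v u2")
      case True
      then have "dd n v u1 \<le> dd n v (pred_v n u2)" using dd_predR[OF v a(4) u2v[symmetric]] by linarith
      then show False using PR_mono[OF a(1) pred_lt[OF a(4)] v a(2)] a(6) by blast
    next
      case False
      then have "dd n v u2 \<le> dd n v (pred_v n u1)" using ne dd_predR[OF v a(1) u1v[symmetric]] by linarith
      then show False using PR_mono[OF a(4) pred_lt[OF a(1)] v a(5)] a(3) by blast
    qed
  qed
  show ?thesis
  proof (rule ex1I[of _ u])
    show "u < n \<and> PR v u \<and> \<not> PR v (pred_v n u)" using un pu np by blast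
  next
    fix u' assume "u' < n \<and> PR v u' \<and> \<not> PR v (pred_v n u')"
    then show "u' = u" using uniq[of u' u] un pu np dd_inj1[OF v] by blast
  qed
qed

lemma lam_spec: assumes v: "v < n" shows "lam n H v < n \<and> PL v (lam n H v) \<and> \<not> PL v (succ_v n (lam n H v))"
proof -
  have "lam n H v = (THE u. u < n \<and> PL v u \<and> \<not> PL v (succ_v n u))" unfolding lam_def PL_def by simp
  then show ?thesis using theI'[OF lam_ex1[OF v]] by simp
qed

lemma rho_spec: assumes v: "v < n" shows "rho n H v < n \<and> PR v (rho n H v) \<and> \<not> PR v (pred_v n (rho n H v))"
proof -
  have "rho n H v = (THE u. u < n \<and> PR v u \<and> \<not> PR v (pred_v n u))" unfolding rho_def PR_def by simp
  then show ?thesis using theI'[OF rho_ex1[OF v]] by simp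
qed

lemma lam_lt: "v < n \<Longrightarrow> lam n H v < n" using lam_spec by blast
lemma rho_lt: "v < n \<Longrightarrow> rho n H v < n" using rho_spec by blast
lemma lam_ne: "v < n \<Longrightarrow> lam n H v \<noteq> v" using lam_spec PL_self by metis
lemma rho_ne: "v < n \<Longrightarrow> rho n H v \<noteq> v" using rho_spec PR_self by metis

lemma small_arc:
  assumes a: "a < n" and b: "b < n"
    and CD: "\<And>x. x < n \<Longrightarrow> x \<in> cint n a b \<longleftrightarrow> x \<notin> D"
    and Dn: "D \<subseteq> {..<n}" and cD: "card D < r"
    and Dsub: "a \<noteq> b \<Longrightarrow> D \<subseteq> cint n b a" and bD: "blk D"
  shows False
proof -
  let ?C = "cint n a b"
  have Cn: "?C \<subseteq> {..<n}" using cint_sub[OF a b] .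
  have fD: "finite D" using Dn finite_subset by blast
  have fC: "finite ?C" using Cn finite_subset by blast
  have "{..<n} \<subseteq> ?C \<union> D" using CD by blast
  then have "n \<le> card (?C \<union> D)" using card_mono[OF _ \<open>{..<n} \<subseteq> ?C \<union> D\<close>] fC fD by simp
  also have "\<dots> \<le> card ?C + card D" by (rule card_Un_le)
  finally have cC: "n \<le> card ?C + card D" .
  have ab: "a \<noteq> b"
  proof
    assume "a = b"
    then have "card ?C = 1" using cint_same[OF a] by simp
    then show False using cC cD nr r2 by linarith
  qed
  have "card ?C - card {a, b} \<le> card (?C - {a, b})" by (rule diff_card_le_card_Diff) simp
  moreover have "card {a, b} = 2" using ab by simp
  ultimately have "r - 2 \<le> card (?C - {a, b})" using cC cD nr by linarith
  then obtain S where S: "S \<subseteq> ?C - {a, b}" "card S = r - 2" using obtain_subset_with_card_n by metis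
  have fS: "finite S" using S(1) fC finite_subset by blast
  define e where "e = insert a (insert b S)"
  have abS: "a \<notin> S" "b \<notin> S" using S(1) by auto
  have ce: "card e = r" unfolding e_def using S(2) fS ab r2 abS by simp
  have eC: "e \<subseteq> ?C" unfolding e_def using S(1) cint_start[OF a b] cint_end[OF a b] by blast
  have en: "e \<subseteq> {..<n}" using eC Cn by blast
  have "e \<in> H"
  proof (rule add[OF en ce])
    fix u u' assume uu: "u < n" "u' < n" "u \<noteq> u'" "e \<subseteq> cint n u u'"
    show "blk (cint n u u')"
    proof (cases "?C \<subseteq> cint n u u'")
      case True
      show ?thesis unfolding blk_def
      proof
        fix h assume hH: "h \<in> H"
        show "h \<inter> cint n u u' \<noteq> {}"
        proof
          assume h0: "h \<inter> cint n u u' = {}"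
          have "h \<subseteq> D"
          proof
            fix x assume x: "x \<in> h"
            then have "x < n" using edge_sub[OF hH] by auto
            moreover have "x \<notin> ?C" using x h0 True by blast
            ultimately show "x \<in> D" using CD by blast
          qed
          then show False using card_small[OF hH _ fD cD] by blast
        qed
      qed
    next
      case False
      then obtain c where c: "c \<in> ?C" "c \<notin> cint n u u'" by blast
      have cn: "c < n" using c Cn by auto
      have ab': "a \<in> cint n u u'" "b \<in> cint n u u'" using uu(4) unfolding e_def by auto
      have "c \<noteq> a" "c \<noteq> b" using c(2) ab' by auto
      then have "cint n b a \<subseteq> cint n u u'" using arc_avoid[OF uu(1,2) b a cn ab'(2,1) c(2) c(1)] by blast
      then show ?thesis using blk_mono[OF bD] Dsub[OF ab] by blast
    qed
  qed
  moreover have "e \<inter> D = {}" using eC en CD by blast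
  ultimately show False using bD unfolding blk_def by blast
qed

lemma L3: assumes v: "v < n" shows "\<exists>g\<in>H. g \<inter> cint n (succ_v n (lam n H v)) v = {}"
proof (rule ccontr)
  define y where "y = lam n H v"
  have yn: "y < n" and yv: "y \<noteq> v" using lam_lt[OF v] lam_ne[OF v] unfolding y_def by auto
  define sy where "sy = succ_v n y"
  have syn: "sy < n" unfolding sy_def using succ_lt[OF yn] .
  define D where "D = cint n sy v"
  assume "\<not> (\<exists>g\<in>H. g \<inter> cint n (succ_v n (lam n H v)) v = {})"
  then have bD: "blk D" unfolding blk_def D_def sy_def y_def by blast
  have PLy: "PL v y" and nPL: "\<not> PL v sy" using lam_spec[OF v] unfolding y_def sy_def by auto
  obtain h where hH: "h \<in> H" and vh: "v \<in> h" and hsub: "h \<subseteq> cint n y v" using PLy unfolding PL_def by blast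
  have hD: "h - {y} \<subseteq> D" using hsub cint_succ_start[OF yn v yv] unfolding D_def sy_def by blast
  have yh: "y \<in> h"
  proof (rule ccontr)
    assume "y \<notin> h"
    then have "h \<subseteq> D" using hD by blast
    then show False using nPL hH vh unfolding PL_def D_def by blast
  qed
  have yD: "y \<notin> D" unfolding D_def sy_def using notin_succ_start[OF yn v yv] .
  have syD: "sy \<in> D" unfolding D_def using cint_start[OF syn v] .
  have Dn: "D \<subseteq> {..<n}" unfolding D_def using cint_sub[OF syn v] .
  show False
  proof (cases "D \<subseteq> h")
    case False
    then obtain w where w: "w \<in> D" "w \<notin> h" by blast
    define w' where "w' = (if sy \<notin> h then sy else w)"
    have w'D: "w' \<in> D" and w'h: "w' \<notin> h" unfolding w'_def using w syD by auto
    have syv: "sy \<noteq> v"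
    proof
      assume "sy = v"
      then have "D = {v}" unfolding D_def using cint_same[OF v] by simp
      then show False using w vh by simp
    qed
    have sy_y: "sy \<noteq> y" using syD yD by blast
    define e where "e = insert w' (h - {y})"
    have ce: "card e = r" unfolding e_def using card_swap[OF hH yh w'h] .
    have en: "e \<subseteq> {..<n}" unfolding e_def using edge_sub[OF hH] w'D Dn by blast
    have sye: "sy \<in> e" unfolding e_def w'_def using sy_y by auto
    have ve: "v \<in> e" unfolding e_def using vh yv by auto
    have eD: "e \<subseteq> D" unfolding e_def using hD w'D by blast
    have "e \<in> H"
    proof (rule add[OF en ce])
      fix u u' assume uu: "u < n" "u' < n" "u \<noteq> u'" "e \<subseteq> cint n u u'"
      show "blk (cint n u u')"
      proof (cases "y \<in> cint n u u'")
        case True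
        then have "h \<subseteq> cint n u u'" using uu(4) unfolding e_def by blast
        then show ?thesis using edge_blk[OF hH uu(1,2)] by blast
      next
        case False
        have a: "sy \<in> cint n u u'" "v \<in> cint n u u'" using uu(4) sye ve by auto
        have yin: "y \<in> cint n v sy" using in_succ_end[OF v yn yv] syv unfolding sy_def by blast
        have "cint n sy v \<subseteq> cint n u u'"
          using arc_avoid[OF uu(1,2) syn v yn a False yin yv] sy_y by blast
        then show ?thesis using blk_mono[OF bD] unfolding D_def by blast
      qed
    qed
    then show False using nPL ve eD unfolding PL_def D_def by blast
  next
    case True
    have fh: "finite h" using edge_fin[OF hH] .
    have "D \<subseteq> h - {y}" using True yD by blast
    then have "card D \<le> card (h - {y})" using card_mono fh by blast
    also have "\<dots> = r - 1" using edge_card[OF hH] yh fh by simp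
    finally have cD: "card D < r" using r2 by linarith
    show False
    proof (rule small_arc[OF succ_lt[OF v] yn _ Dn cD _ bD])
      fix x assume "x < n"
      then show "x \<in> cint n (succ_v n v) y \<longleftrightarrow> x \<notin> D" unfolding D_def sy_def using compl_succ[OF yn v yv] by blast
    next
      assume "succ_v n v \<noteq> y"
      then show "D \<subseteq> cint n y (succ_v n v)" unfolding D_def sy_def using sub_b8[OF yn v yv] by blast
    qed
  qed
qed

lemma L4: assumes v: "v < n" shows "\<exists>g\<in>H. g \<inter> cint n v (pred_v n (rho n H v)) = {}"
proof (rule ccontr)
  define z where "z = rho n H v"
  have zn: "z < n" and zv: "z \<noteq> v" using rho_lt[OF v] rho_ne[OF v] unfolding z_def by auto
  define pz where "pz = pred_v n z"
  have pzn: "pz < n" unfolding pz_def using pred_lt[OF zn] .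
  define D where "D = cint n v pz"
  assume "\<not> (\<exists>g\<in>H. g \<inter> cint n v (pred_v n (rho n H v)) = {})"
  then have bD: "blk D" unfolding blk_def D_def pz_def z_def by blast
  have PRz: "PR v z" and nPR: "\<not> PR v pz" using rho_spec[OF v] unfolding z_def pz_def by auto
  obtain h where hH: "h \<in> H" and vh: "v \<in> h" and hsub: "h \<subseteq> cint n v z" using PRz unfolding PR_def by blast
  have hD: "h - {z} \<subseteq> D" using hsub cint_pred_end[OF v zn zv] unfolding D_def pz_def by blast
  have zh: "z \<in> h"
  proof (rule ccontr)
    assume "z \<notin> h"
    then have "h \<subseteq> D" using hD by blast
    then show False using nPR hH vh unfolding PR_def D_def by blast
  qed
  have zD: "z \<notin> D" unfolding D_def pz_def using notin_pred_end[OF v zn zv[symmetric]] .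
  have pzD: "pz \<in> D" unfolding D_def using cint_end[OF v pzn] .
  have Dn: "D \<subseteq> {..<n}" unfolding D_def using cint_sub[OF v pzn] .
  show False
  proof (cases "D \<subseteq> h")
    case False
    then obtain w where w: "w \<in> D" "w \<notin> h" by blast
    define w' where "w' = (if pz \<notin> h then pz else w)"
    have w'D: "w' \<in> D" and w'h: "w' \<notin> h" unfolding w'_def using w pzD by auto
    have pzv: "pz \<noteq> v"
    proof
      assume "pz = v"
      then have "D = {v}" unfolding D_def using cint_same[OF v] by simp
      then show False using w vh by simp
    qed
    have pz_z: "pz \<noteq> z" using pzD zD by blast
    define e where "e = insert w' (h - {z})"
    have ce: "card e = r" unfolding e_def using card_swap[OF hH zh w'h] .
    have en: "e \<subseteq> {..<n}" unfolding e_def using edge_sub[OF hH] w'D Dn by blast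
    have pze: "pz \<in> e" unfolding e_def w'_def using pz_z by auto
    have ve: "v \<in> e" unfolding e_def using vh zv by auto
    have eD: "e \<subseteq> D" unfolding e_def using hD w'D by blast
    have "e \<in> H"
    proof (rule add[OF en ce])
      fix u u' assume uu: "u < n" "u' < n" "u \<noteq> u'" "e \<subseteq> cint n u u'"
      show "blk (cint n u u')"
      proof (cases "z \<in> cint n u u'")
        case True
        then have "h \<subseteq> cint n u u'" using uu(4) unfolding e_def by blast
        then show ?thesis using edge_blk[OF hH uu(1,2)] by blast
      next
        case False
        have a: "v \<in> cint n u u'" "pz \<in> cint n u u'" using uu(4) pze ve by auto
        have zin: "z \<in> cint n pz v" using in_pred_start[OF v zn zv] pzv unfolding pz_def by blast
        have "cint n v pz \<subseteq> cint n u u'"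
          using arc_avoid[OF uu(1,2) v pzn zn a False zin] pz_z zv by blast
        then show ?thesis using blk_mono[OF bD] unfolding D_def by blast
      qed
    qed
    then show False using nPR ve eD unfolding PR_def D_def by blast
  next
    case True
    have fh: "finite h" using edge_fin[OF hH] .
    have "D \<subseteq> h - {z}" using True zD by blast
    then have "card D \<le> card (h - {z})" using card_mono fh by blast
    also have "\<dots> = r - 1" using edge_card[OF hH] zh fh by simp
    finally have cD: "card D < r" using r2 by linarith
    show False
    proof (rule small_arc[OF zn pred_lt[OF v] _ Dn cD _ bD])
      fix x assume "x < n"
      then show "x \<in> cint n z (pred_v n v) \<longleftrightarrow> x \<notin> D" unfolding D_def pz_def using compl_pred[OF zn v zv] by blast
    next
      assume "z \<noteq> pred_v n v"
      then show "D \<subseteq> cint n (pred_v n v) z" unfolding D_def pz_def using sub_c8[OF zn v zv] by metis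
    qed
  qed
qed

lemma BL: assumes v: "v < n" and w: "w < n" shows "blk (cint n w v) \<longleftrightarrow> dd n (lam n H v) v \<le> dd n w v"
proof
  assume b: "blk (cint n w v)"
  show "dd n (lam n H v) v \<le> dd n w v"
  proof (rule ccontr)
    assume "\<not> ?thesis"
    then have lt: "dd n w v < dd n (lam n H v) v" by simp
    have yn: "lam n H v < n" and yv: "lam n H v \<noteq> v" using lam_lt[OF v] lam_ne[OF v] by auto
    have "dd n w v \<le> dd n (succ_v n (lam n H v)) v" using lt dd_succL[OF yn v yv] by linarith
    then have "cint n w v \<subseteq> cint n (succ_v n (lam n H v)) v" using cint_mono_end[OF w succ_lt[OF yn] v] by blast
    then show False using L3[OF v] b unfolding blk_def by blast
  qed
next
  assume le: "dd n (lam n H v) v \<le> dd n w v"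
  obtain h where "h \<in> H" "v \<in> h" "h \<subseteq> cint n (lam n H v) v" using lam_spec[OF v] unfolding PL_def by blast
  then show "blk (cint n w v)" using cint_mono_end[OF lam_lt[OF v] w v le] edge_blk[OF _ w v] by blast
qed

lemma BR: assumes v: "v < n" and w: "w < n" shows "blk (cint n v w) \<longleftrightarrow> dd n v (rho n H v) \<le> dd n v w"
proof
  assume b: "blk (cint n v w)"
  show "dd n v (rho n H v) \<le> dd n v w"
  proof (rule ccontr)
    assume "\<not> ?thesis"
    then have lt: "dd n v w < dd n v (rho n H v)" by simp
    have zn: "rho n H v < n" and zv: "rho n H v \<noteq> v" using rho_lt[OF v] rho_ne[OF v] by auto
    have "dd n v w \<le> dd n v (pred_v n (rho n H v))" using lt dd_predR[OF v zn zv[symmetric]] by linarith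
    then have "cint n v w \<subseteq> cint n v (pred_v n (rho n H v))" using cint_mono_start[OF w pred_lt[OF zn] v] by blast
    then show False using L4[OF v] b unfolding blk_def by blast
  qed
next
  assume le: "dd n v (rho n H v) \<le> dd n v w"
  obtain h where "h \<in> H" "v \<in> h" "h \<subseteq> cint n v (rho n H v)" using rho_spec[OF v] unfolding PR_def by blast
  then show "blk (cint n v w)" using cint_mono_start[OF rho_lt[OF v] w v le] edge_blk[OF _ v w] by blast
qed

lemma DB: assumes "a < n" "b < n" "c < n" "d < n" "blk (cint n a b)" "blk (cint n c d)"
  "cint n a b \<inter> cint n c d = {}" shows False
proof -
  have le: "dd n a (rho n H a) \<le> dd n a b" using BR[OF assms(1,2)] assms(5) by blast
  obtain h where hH: "h \<in> H" and hs: "h \<subseteq> cint n a (rho n H a)" using rho_spec[OF assms(1)] unfolding PR_def by blast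
  then have "h \<subseteq> cint n a b" using cint_mono_start[OF rho_lt[OF assms(1)] assms(2,1) le] by blast
  then show False using assms(6,7) hH unfolding blk_def by blast
qed

lemma R1: assumes v: "v < n" shows "rho n H (succ_v n v) = lam n H v"
proof -
  define y where "y = lam n H v"
  define sv where "sv = succ_v n v"
  define z where "z = rho n H sv"
  have yn: "y < n" and yv: "y \<noteq> v" using lam_lt[OF v] lam_ne[OF v] unfolding y_def by auto
  have svn: "sv < n" unfolding sv_def using succ_lt[OF v] .
  have zn: "z < n" unfolding z_def using rho_lt[OF svn] .
  have by1: "blk (cint n y v)" using BL[OF v yn] unfolding y_def by simp
  have bz: "blk (cint n sv z)" using BR[OF svn zn] unfolding z_def by simp
  have le1: "dd n sv y \<le> dd n sv z"
  proof (rule ccontr)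
    assume "\<not> ?thesis"
    then have lt: "dd n sv z < dd n sv y" by simp
    have "y \<in> cint n sv v" using cint_full2[OF v] yn unfolding sv_def by simp
    then have "dd n sv y \<le> dd n sv v" using cint_iff[OF svn v] by blast
    then have "cint n sv z \<inter> cint n y v = {}" using disj[OF svn zn yn v lt] by blast
    then show False using DB[OF svn zn yn v bz by1] by blast
  qed
  have bsy: "blk (cint n sv y)" unfolding blk_def
  proof
    fix f assume fH: "f \<in> H"
    show "f \<inter> cint n sv y \<noteq> {}"
    proof
      assume f0: "f \<inter> cint n sv y = {}"
      obtain g where gH: "g \<in> H" and g0: "g \<inter> cint n (succ_v n y) v = {}" using L3[OF v] unfolding y_def by blast
      have "f \<subseteq> cint n (succ_v n y) v"
      proof
        fix x assume x: "x \<in> f"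
        then have xn: "x < n" using edge_sub[OF fH] by auto
        have "x \<notin> cint n sv y" using x f0 by blast
        then show "x \<in> cint n (succ_v n y) v" using compl_succ[OF yn v yv xn] unfolding sv_def by blast
      qed
      then have "blk (cint n (succ_v n y) v)" using edge_blk[OF fH succ_lt[OF yn] v] by blast
      then show False using gH g0 unfolding blk_def by blast
    qed
  qed
  have le2: "dd n sv z \<le> dd n sv y" using BR[OF svn yn] bsy unfolding z_def by blast
  have "dd n sv z = dd n sv y" using le1 le2 by simp
  then have "z = y" using dd_inj1[OF svn zn yn] by blast
  then show ?thesis unfolding z_def y_def sv_def .
qed

lemma ord: assumes v: "v < n" shows "dd n v (rho n H v) \<le> dd n v (lam n H v)"
proof -
  have yn: "lam n H v < n" and yv: "lam n H v \<noteq> v" using lam_lt[OF v] lam_ne[OF v] by auto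
  have "blk (cint n (succ_v n v) (rho n H (succ_v n v)))" using BR[OF succ_lt[OF v] rho_lt[OF succ_lt[OF v]]] by simp
  then have "blk (cint n (succ_v n v) (lam n H v))" using R1[OF v] by simp
  then have "blk (cint n v (lam n H v))" using blk_mono sub_e1[OF yn v yv] by blast
  then show ?thesis using BR[OF v yn] by blast
qed

lemma Iv_mem: assumes v: "v < n" and x: "x < n"
  shows "x \<in> cint n (rho n H v) (lam n H v) \<longleftrightarrow> x \<noteq> v \<and> blk (cint n v x) \<and> blk (cint n x v)"
  using Iv_char[OF v rho_lt[OF v] lam_lt[OF v] x rho_ne[OF v] lam_ne[OF v] ord[OF v]] BR[OF v x] BL[OF v x] by blast

lemma Iv_sym: assumes v: "v < n" and x: "x < n"
  shows "x \<in> cint n (rho n H v) (lam n H v) \<longleftrightarrow> v \<in> cint n (rho n H x) (lam n H x)"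
  using Iv_mem[OF v x] Iv_mem[OF x v] by blast

lemma P4: assumes v: "v < n" and ne: "lam n H v \<noteq> rho n H v"
  shows "lam n H (rho n H v) = v \<and> rho n H (rho n H v) \<in> cint_ho n (lam n H v) v"
proof -
  define y where "y = lam n H v"
  define z where "z = rho n H v"
  have yn: "y < n" and yv: "y \<noteq> v" using lam_lt[OF v] lam_ne[OF v] unfolding y_def by auto
  have zn: "z < n" and zv: "z \<noteq> v" using rho_lt[OF v] rho_ne[OF v] unfolding z_def by auto
  have "dd n v z \<le> dd n v y" using ord[OF v] unfolding y_def z_def .
  moreover have "dd n v z \<noteq> dd n v y" using dd_inj1[OF v zn yn] ne unfolding y_def z_def by metis
  ultimately have dzy: "dd n v z < dd n v y" by simp
  obtain h where hH: "h \<in> H" and vh: "v \<in> h" and hs: "h \<subseteq> cint n y v" using lam_spec[OF v] unfolding PL_def y_def by blast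
  have hn: "h \<subseteq> {..<n}" using edge_sub[OF hH] .
  define lz where "lz = lam n H z"
  have lzn: "lz < n" unfolding lz_def using lam_lt[OF zn] .
  have a: "dd n lz z \<le> dd n v z" using BL[OF zn v] BR[OF v zn] unfolding lz_def z_def by simp
  have "\<not> blk (cint n (succ_v n v) z)"
  proof
    assume "blk (cint n (succ_v n v) z)"
    then obtain x where "x \<in> h" "x \<in> cint n (succ_v n v) z" using hH unfolding blk_def by blast
    then show False using f1[OF v yn zn _ zv yv dzy] hs hn by blast
  qed
  then have b: "dd n (succ_v n v) z < dd n lz z" using BL[OF zn succ_lt[OF v]] unfolding lz_def by simp
  have "dd n lz z = dd n v z" using a b dd_succL[OF v zn zv[symmetric]] by linarith
  then have l: "lz = v" using dd_inj2[OF zn lzn v] by blast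
  define rz where "rz = rho n H z"
  have rzn: "rz < n" unfolding rz_def using rho_lt[OF zn] .
  have "blk (cint n z (pred_v n v))"
  proof -
    obtain g where gH: "g \<in> H" and g0: "g \<inter> cint n v (pred_v n z) = {}" using L4[OF v] unfolding z_def by blast
    have "g \<subseteq> cint n z (pred_v n v)"
    proof
      fix x assume x: "x \<in> g"
      then have xn: "x < n" using edge_sub[OF gH] by auto
      have "x \<notin> cint n v (pred_v n z)" using x g0 by blast
      then show "x \<in> cint n z (pred_v n v)" using compl_pred[OF zn v zv xn] by blast
    qed
    then show ?thesis using edge_blk[OF gH zn pred_lt[OF v]] by blast
  qed
  then have c: "dd n z rz \<le> dd n z (pred_v n v)" using BR[OF zn pred_lt[OF v]] unfolding rz_def by blast
  have "\<not> blk (cint n z (pred_v n y))"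
  proof
    assume "blk (cint n z (pred_v n y))"
    then obtain x where "x \<in> h" "x \<in> cint n z (pred_v n y)" using hH unfolding blk_def by blast
    then show False using f4[OF v yn zn _ zv yv dzy] hs hn by blast
  qed
  then have d: "dd n z (pred_v n y) < dd n z rz" using BR[OF zn pred_lt[OF yn]] unfolding rz_def by simp
  have "rz \<in> cint_ho n y v" using f5[OF v yn zn rzn zv yv dzy d c] .
  then show ?thesis using l unfolding lz_def rz_def y_def z_def by simp
qed

lemma P2: assumes i: "i < n" and j: "j < n" and ij: "i \<noteq> j"
  shows "card (cint n (rho n H i) (lam n H i) \<inter> cint n (rho n H j) (lam n H j)) \<le> 1"
proof -
  let ?A = "cint n (rho n H i) (lam n H i) \<inter> cint n (rho n H j) (lam n H j)"
  have fin: "finite ?A" using cint_sub[OF rho_lt[OF i] lam_lt[OF i]] finite_subset by blast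
  have "\<forall>x\<in>?A. \<forall>x'\<in>?A. x = x'"
  proof (intro ballI)
    fix x x' assume x: "x \<in> ?A" and x': "x' \<in> ?A"
    have xn: "x < n" and x'n: "x' < n" using x x' cint_sub[OF rho_lt[OF i] lam_lt[OF i]] by auto
    show "x = x'"
    proof (rule ccontr)
      assume xx: "x \<noteq> x'"
      have A: "x \<noteq> i" "blk (cint n i x)" "blk (cint n x i)" using x Iv_mem[OF i xn] by auto
      have B: "x \<noteq> j" "blk (cint n j x)" "blk (cint n x j)" using x Iv_mem[OF j xn] by auto
      have C: "x' \<noteq> i" "blk (cint n i x')" "blk (cint n x' i)" using x' Iv_mem[OF i x'n] by auto
      have D: "x' \<noteq> j" "blk (cint n j x')" "blk (cint n x' j)" using x' Iv_mem[OF j x'n] by auto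
      have d1: "dd n i j \<noteq> dd n i x" using dd_inj1[OF i j xn] B(1) by metis
      have d2: "dd n i j \<noteq> dd n i x'" using dd_inj1[OF i j x'n] D(1) by metis
      have d3: "dd n i x \<noteq> dd n i x'" using dd_inj1[OF i xn x'n] xx by metis
      have ji: "j \<noteq> i" using ij by simp
      consider "dd n i j < dd n i x" "dd n i x < dd n i x'" | "dd n i j < dd n i x'" "dd n i x' < dd n i x"
        | "dd n i x < dd n i j" "dd n i j < dd n i x'" | "dd n i x < dd n i x'" "dd n i x' < dd n i j"
        | "dd n i x' < dd n i j" "dd n i j < dd n i x" | "dd n i x' < dd n i x" "dd n i x < dd n i j"
        using d1 d2 d3 by linarith
      then show False
      proof cases
        case 1
        have "dd n j x < dd n j x'" "dd n j x' < dd n j i" using rot[OF i j xn x'n 1 ji] by auto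
        then have "cint n j x \<inter> cint n x' i = {}" using disj[OF j xn x'n i] by simp
        then show False using DB[OF j xn x'n i B(2) C(3)] by blast
      next
        case 2
        have "dd n j x' < dd n j x" "dd n j x < dd n j i" using rot[OF i j x'n xn 2 ji] by auto
        then have "cint n j x' \<inter> cint n x i = {}" using disj[OF j x'n xn i] by simp
        then show False using DB[OF j x'n xn i D(2) A(3)] by blast
      next
        case 3
        then have "cint n i x \<inter> cint n j x' = {}" using disj[OF i xn j x'n] by simp
        then show False using DB[OF i xn j x'n A(2) D(2)] by blast
      next
        case 4
        then have "cint n i x \<inter> cint n x' j = {}" using disj[OF i xn x'n j] by simp
        then show False using DB[OF i xn x'n j A(2) D(3)] by blast
      next
        case 5
        then have "cint n i x' \<inter> cint n j x = {}" using disj[OF i x'n j xn] by simp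
        then show False using DB[OF i x'n j xn C(2) B(2)] by blast
      next
        case 6
        then have "cint n i x' \<inter> cint n x j = {}" using disj[OF i x'n xn j] by simp
        then show False using DB[OF i x'n xn j C(2) B(3)] by blast
      qed
    qed
  qed
  then show ?thesis using card_le_Suc0_iff_eq[OF fin] by simp
qed

lemma P3: assumes j: "j < n"
  shows "\<exists>!i. i < n \<and> j \<in> cint n (rho n H i) (lam n H i) \<and> (j + 1) mod n \<in> cint n (rho n H i) (lam n H i)"
proof -
  define sj where "sj = succ_v n j"
  have sjd: "(j + 1) mod n = sj" unfolding sj_def succ_v_def by simp
  have sjn: "sj < n" unfolding sj_def using succ_lt[OF j] .
  have jsj: "j \<noteq> sj" unfolding sj_def using succ_char[OF j] n4 by linarith
  define l where "l = lam n H j"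
  have ln: "l < n" unfolding l_def using lam_lt[OF j] .
  have "l \<in> cint n (rho n H j) (lam n H j)" unfolding l_def using cint_end[OF rho_lt[OF j] lam_lt[OF j]] .
  then have e1: "j \<in> cint n (rho n H l) (lam n H l)" using Iv_sym[OF j ln] by blast
  have "l \<in> cint n (rho n H sj) (lam n H sj)" unfolding l_def sj_def R1[OF j] using cint_start[OF lam_lt[OF j] lam_lt[OF succ_lt[OF j]]] .
  then have e2: "sj \<in> cint n (rho n H l) (lam n H l)" using Iv_sym[OF sjn ln] by blast
  show ?thesis unfolding sjd
  proof (rule ex1I[of _ l])
    show "l < n \<and> j \<in> cint n (rho n H l) (lam n H l) \<and> sj \<in> cint n (rho n H l) (lam n H l)" using ln e1 e2 by blast
  next
    fix i assume a: "i < n \<and> j \<in> cint n (rho n H i) (lam n H i) \<and> sj \<in> cint n (rho n H i) (lam n H i)"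
    then have in1: "i \<in> cint n (rho n H j) (lam n H j) \<inter> cint n (rho n H sj) (lam n H sj)"
      using Iv_sym[OF j] Iv_sym[OF sjn] by blast
    have in2: "l \<in> cint n (rho n H j) (lam n H j) \<inter> cint n (rho n H sj) (lam n H sj)"
      using e1 e2 Iv_sym[OF j ln] Iv_sym[OF sjn ln] by blast
    have fin: "finite (cint n (rho n H j) (lam n H j) \<inter> cint n (rho n H sj) (lam n H sj))"
      using cint_sub[OF rho_lt[OF j] lam_lt[OF j]] finite_subset by blast
    have "card (cint n (rho n H j) (lam n H j) \<inter> cint n (rho n H sj) (lam n H sj)) \<le> Suc 0"
      using P2[OF j sjn jsj] by simp
    then show "i = l" using card_le_Suc0_iff_eq[OF fin] in1 in2 by blast
  qed
qed

end

theorem proposition3p5: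
  fixes n r :: nat and H :: "nat set set"
  assumes "r \<ge> 2" and "n \<ge> 2 * r" and "M1_saturated n r H"
  shows "(\<forall>i<n. rho n H ((i + 1) mod n) = lam n H i)
    \<and> (\<forall>i<n. \<forall>j<n. i \<noteq> j \<longrightarrow>
          card (cint n (rho n H i) (lam n H i) \<inter> cint n (rho n H j) (lam n H j)) \<le> 1)
    \<and> (\<forall>j<n. \<exists>!i. i < n \<and> j \<in> cint n (rho n H i) (lam n H i)
                      \<and> (j + 1) mod n \<in> cint n (rho n H i) (lam n H i))
    \<and> (\<forall>i<n. lam n H i \<noteq> rho n H i \<longrightarrow>
          lam n H (rho n H i) = i \<and> rho n H (rho n H i) \<in> cint_ho n (lam n H i) i)"
proof -
  interpret sat n r H using assms by (unfold_locales) auto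
  have 1: "\<forall>i<n. rho n H ((i + 1) mod n) = lam n H i"
    using R1 unfolding succ_v_def by blast
  show ?thesis using 1 P2 P3 P4 by blast
qed

end
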